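(* Let $G$ be a simple graph with at least one edge, with edge set $E$ and any orientation of its edges. Then $\mathcal{H}(G)$ is reducible if and only if there is a partition $E=E_1\cup E_2$ (into two nonempty disjoint sets) such that for every pair of edges $e_1\in E_1$ and $e_2\in E_2$, either $e_1$ and $e_2$ are two edges of a common triangle of $G$, or $e_1$ and $e_2$ share no vertex.
   Context: For an oriented edge $e$ write $e^-$ for its tail and $e^+$ for its head. For distinct edges $e,e'$: $e\leftrightarrow e'$ means $e^+=e'^-$ or $e'^+=e^-$; $e\overset{\pm}{\sim}e'$ means $e^+=e'^+$ or $e^-=e'^-$; $e\vartriangle e'$ means $e,e'$ are two edges of a common triangle of $G$. $\triangle(e)$ is the number of triangles containing $e$. The Helmholtzian matrix $\mathcal{H}(G)=(h_{ee'})$ is indexed by edges, with $h_{ee}=\triangle(e)+2$, and for $e\ne e'$: $h_{ee'}=-1$ if $e\leftrightarrow e'$ and not $e\vartriangle e'$; $h_{ee'}=1$ if $e\overset{\pm}{\sim}e'$ and not $e\vartriangle e'$; $h_{ee'}=0$ otherwise. A symmetric square matrix $M$ is reducible if there is a permutation matrix $P$ with $P^{-1}MP=\begin{pmatrix}E&O\\O&F\end{pmatrix}$ for square (nonempty) blocks $E,F$; otherwise it is irreducible. *)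

theory Defs
  imports "Jordan_Normal_Form.Matrix" "HOL-Combinatorics.Permutations"
begin

text \<open>An oriented simple graph: vertex set V, oriented edge set E (pairs (tail, head)),
  no loops, and at most one orientation per unordered pair.\<close>
definition oriented_simple_graph :: "'v set \<Rightarrow> ('v \<times> 'v) set \<Rightarrow> bool" where
  "oriented_simple_graph V E \<longleftrightarrow> finite V \<and> E \<subseteq> V \<times> V \<and>
     (\<forall>(u,v)\<in>E. u \<noteq> v) \<and> (\<forall>(u,v)\<in>E. (v,u) \<notin> E)"

definition adj :: "('v \<times> 'v) set \<Rightarrow> 'v \<Rightarrow> 'v \<Rightarrow> bool" where
  "adj E u v \<longleftrightarrow> (u,v) \<in> E \<or> (v,u) \<in> E"

definition is_triangle :: "('v \<times> 'v) set \<Rightarrow> 'v set \<Rightarrow> bool" where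
  "is_triangle E T \<longleftrightarrow> (\<exists>a b c. T = {a,b,c} \<and> a \<noteq> b \<and> b \<noteq> c \<and> a \<noteq> c \<and>
      adj E a b \<and> adj E b c \<and> adj E a c)"

definition edge_in_triangle :: "('v \<times> 'v) \<Rightarrow> 'v set \<Rightarrow> bool" where
  "edge_in_triangle e T \<longleftrightarrow> fst e \<in> T \<and> snd e \<in> T"

definition num_triangles :: "('v \<times> 'v) set \<Rightarrow> ('v \<times> 'v) \<Rightarrow> nat" where
  "num_triangles E e = card {T. is_triangle E T \<and> edge_in_triangle e T}"

definition head_tail :: "('v \<times> 'v) \<Rightarrow> ('v \<times> 'v) \<Rightarrow> bool" where
  "head_tail e e' \<longleftrightarrow> snd e = fst e' \<or> snd e' = fst e"

definition same_end :: "('v \<times> 'v) \<Rightarrow> ('v \<times> 'v) \<Rightarrow> bool" where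
  "same_end e e' \<longleftrightarrow> snd e = snd e' \<or> fst e = fst e'"

definition tri_rel :: "('v \<times> 'v) set \<Rightarrow> ('v \<times> 'v) \<Rightarrow> ('v \<times> 'v) \<Rightarrow> bool" where
  "tri_rel E e e' \<longleftrightarrow> e \<noteq> e' \<and> (\<exists>T. is_triangle E T \<and> edge_in_triangle e T \<and> edge_in_triangle e' T)"

definition helm_entry :: "('v \<times> 'v) set \<Rightarrow> ('v \<times> 'v) \<Rightarrow> ('v \<times> 'v) \<Rightarrow> int" where
  "helm_entry E e e' =
    (if e = e' then int (num_triangles E e) + 2
     else if head_tail e e' \<and> \<not> tri_rel E e e' then -1
     else if same_end e e' \<and> \<not> tri_rel E e e' then 1
     else 0)"

definition helmholtzian :: "('v \<times> 'v) set \<Rightarrow> ('v \<times> 'v) list \<Rightarrow> int mat" where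
  "helmholtzian E es = mat (length es) (length es) (\<lambda>(i,j). helm_entry E (es ! i) (es ! j))"

definition permutation_mat :: "nat \<Rightarrow> 'a :: {zero,one} mat \<Rightarrow> bool" where
  "permutation_mat n P \<longleftrightarrow> (\<exists>\<sigma>. \<sigma> permutes {..<n} \<and>
      P = mat n n (\<lambda>(i,j). if \<sigma> i = j then 1 else 0))"

definition reducible_mat :: "'a :: comm_ring_1 mat \<Rightarrow> bool" where
  "reducible_mat M \<longleftrightarrow> (\<exists>n P Pinv k l E F.
      M \<in> carrier_mat n n \<and> permutation_mat n P \<and>
      inverts_mat P Pinv \<and> inverts_mat Pinv P \<and>
      0 < k \<and> 0 < l \<and> E \<in> carrier_mat k k \<and> F \<in> carrier_mat l l \<and>
      Pinv * M * P = four_block_mat E (0\<^sub>m k l) (0\<^sub>m l k) F)"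

end

theory Submission imports Defs begin

abbreviation hinv :: "(nat \<Rightarrow> nat) \<Rightarrow> nat \<Rightarrow> nat" where "hinv f \<equiv> Hilbert_Choice.inv f"

definition pmat :: "nat \<Rightarrow> (nat \<Rightarrow> nat) \<Rightarrow> 'a :: {zero,one} mat" where
  "pmat n \<sigma> = mat n n (\<lambda>(i,j). if \<sigma> i = j then 1 else 0)"

lemma sum_perm_delta:
  assumes "\<sigma> permutes {..<n}" "j < n"
  shows "(\<Sum>k\<in>{0..<n}. f k * (if \<sigma> k = j then 1 else 0)) = (f (hinv \<sigma> j) :: 'a :: semiring_1)"
proof -
  have "(\<Sum>k\<in>{0..<n}. f k * (if \<sigma> k = j then 1 else 0)) = (\<Sum>k\<in>{0..<n}. if k = hinv \<sigma> j then f k else 0)"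
  proof (rule sum.cong)
    fix k
    have "(\<sigma> k = j) = (k = hinv \<sigma> j)" using permutes_inverses[OF assms(1)] by metis
    thus "f k * (if \<sigma> k = j then 1 else 0) = (if k = hinv \<sigma> j then f k else 0)" by simp
  qed simp
  also have "\<dots> = f (hinv \<sigma> j)"
    using permutes_in_image[OF permutes_inv[OF assms(1)]] assms(2) by (simp add: sum.delta)
  finally show ?thesis .
qed

lemma sum_perm_delta':
  assumes "\<sigma> permutes {..<n}" "j < n"
  shows "(\<Sum>k\<in>{0..<n}. (if \<sigma> k = j then 1 else 0) * f k) = (f (hinv \<sigma> j) :: 'a :: semiring_1)"
proof -
  have "(\<Sum>k\<in>{0..<n}. (if \<sigma> k = j then 1 else 0) * f k) = (\<Sum>k\<in>{0..<n}. f k * (if \<sigma> k = j then 1 else 0))"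
    by (rule sum.cong) (simp_all add: mult.commute)
  thus ?thesis using sum_perm_delta[OF assms, of f] by simp
qed

lemma conj_pmat:
  assumes p: "\<sigma> permutes {..<n}" and M: "M \<in> carrier_mat n n"
  shows "transpose_mat (pmat n \<sigma>) * M * pmat n \<sigma> = mat n n (\<lambda>(i,j). (M $$ (hinv \<sigma> i, hinv \<sigma> j) :: 'a :: comm_ring_1))"
proof (rule eq_matI)
  fix i j assume ij: "i < dim_row (mat n n (\<lambda>(i,j). M $$ (hinv \<sigma> i, hinv \<sigma> j)))"
    "j < dim_col (mat n n (\<lambda>(i,j). M $$ (hinv \<sigma> i, hinv \<sigma> j)))"
  hence i: "i < n" and j: "j < n" by auto
  have inn: "\<And>x. x < n \<Longrightarrow> hinv \<sigma> x < n"
    using permutes_in_image[OF permutes_inv[OF p]] by auto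
  have A: "(transpose_mat (pmat n \<sigma>) * M) $$ (i, m) = M $$ (hinv \<sigma> i, m)" if m: "m < n" for m
  proof -
    have "(transpose_mat (pmat n \<sigma>) * M) $$ (i, m) = (\<Sum>k\<in>{0..<n}. (if \<sigma> k = i then 1 else 0) * M $$ (k, m))"
      using i m M by (simp add: pmat_def scalar_prod_def)
    also have "\<dots> = M $$ (hinv \<sigma> i, m)" by (rule sum_perm_delta'[OF p i])
    finally show ?thesis .
  qed
  have "(transpose_mat (pmat n \<sigma>) * M * pmat n \<sigma>) $$ (i, j)
     = (\<Sum>k\<in>{0..<n}. (transpose_mat (pmat n \<sigma>) * M) $$ (i, k) * (if \<sigma> k = j then 1 else 0))"
    using i j M by (simp add: pmat_def scalar_prod_def)
  also have "\<dots> = (transpose_mat (pmat n \<sigma>) * M) $$ (i, hinv \<sigma> j)" by (rule sum_perm_delta[OF p j])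
  also have "\<dots> = M $$ (hinv \<sigma> i, hinv \<sigma> j)" using A inn j by simp
  finally show "(transpose_mat (pmat n \<sigma>) * M * pmat n \<sigma>) $$ (i, j) = mat n n (\<lambda>(i,j). M $$ (hinv \<sigma> i, hinv \<sigma> j)) $$ (i, j)"
    using i j by simp
qed (use M in \<open>auto simp: pmat_def\<close>)

lemma pmat_orth:
  assumes p: "\<sigma> permutes {..<n}"
  shows "transpose_mat (pmat n \<sigma>) * (pmat n \<sigma> :: 'a :: comm_ring_1 mat) = 1\<^sub>m n"
proof -
  have "transpose_mat (pmat n \<sigma>) * (pmat n \<sigma> :: 'a mat) = transpose_mat (pmat n \<sigma>) * 1\<^sub>m n * pmat n \<sigma>"
    by (simp add: pmat_def)
  also have "\<dots> = mat n n (\<lambda>(i,j). (1\<^sub>m n :: 'a mat) $$ (hinv \<sigma> i, hinv \<sigma> j))"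
    by (rule conj_pmat[OF p]) simp
  also have "\<dots> = 1\<^sub>m n"
    using permutes_in_image[OF permutes_inv[OF p]] permutes_inv_eq[OF p]
    by (intro eq_matI) (auto simp: permutes_inverses(1)[OF p])
  finally show ?thesis .
qed

lemma pmat_transpose:
  assumes p: "\<sigma> permutes {..<n}"
  shows "transpose_mat (pmat n \<sigma>) = (pmat n (hinv \<sigma>) :: 'a :: comm_ring_1 mat)"
  using permutes_inv_eq[OF p] by (intro eq_matI) (auto simp: pmat_def)

lemma pmat_orth2:
  assumes p: "\<sigma> permutes {..<n}"
  shows "pmat n \<sigma> * transpose_mat (pmat n \<sigma> :: 'a :: comm_ring_1 mat) = 1\<^sub>m n"
proof -
  have p': "hinv \<sigma> permutes {..<n}" using permutes_inv[OF p] .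
  have "pmat n \<sigma> = transpose_mat (pmat n (hinv \<sigma>) :: 'a mat)"
    using pmat_transpose[OF p'] inv_inv_eq[OF permutes_bij[OF p]] by metis
  thus ?thesis using pmat_orth[OF p'] pmat_transpose[OF p] by simp
qed


lemma helm_zero:
  assumes "e \<noteq> e'"
  shows "helm_entry E e e' = 0 \<longleftrightarrow> tri_rel E e e' \<or> {fst e, snd e} \<inter> {fst e', snd e'} = {}"
  using assms unfolding helm_entry_def head_tail_def same_end_def by auto

lemma tri_rel_sym: "tri_rel E e e' \<Longrightarrow> tri_rel E e' e"
  unfolding tri_rel_def by blast

lemma helm_dim: "helmholtzian E es \<in> carrier_mat (length es) (length es)"
  by (simp add: helmholtzian_def)

lemma helm_idx: "i < length es \<Longrightarrow> j < length es \<Longrightarrow> helmholtzian E es $$ (i,j) = helm_entry E (es!i) (es!j)"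
  by (simp add: helmholtzian_def)

lemma dir1:
  assumes "distinct es" "set es = E" "reducible_mat (helmholtzian E es)"
  shows "\<exists>E1 E2. E1 \<noteq> {} \<and> E2 \<noteq> {} \<and> E1 \<inter> E2 = {} \<and> E1 \<union> E2 = E \<and>
       (\<forall>e1\<in>E1. \<forall>e2\<in>E2. tri_rel E e1 e2 \<or> {fst e1, snd e1} \<inter> {fst e2, snd e2} = {})"
proof -
  define M where "M = helmholtzian E es"
  from assms(3) obtain n P Pinv k l B F where
    Mc: "M \<in> carrier_mat n n" and pm: "permutation_mat n P" and inv1: "inverts_mat P Pinv"
    and inv2: "inverts_mat Pinv P" and k: "0 < k" and l: "0 < l" and B: "B \<in> carrier_mat k k"
    and F: "F \<in> carrier_mat l l" and eq: "Pinv * M * P = four_block_mat B (0\<^sub>m k l) (0\<^sub>m l k) F"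
    unfolding reducible_mat_def M_def by blast
  have n: "n = length es" using Mc helm_dim[of E es] unfolding M_def by auto
  from pm obtain \<sigma> where p: "\<sigma> permutes {..<n}" and P: "P = pmat n \<sigma>"
    unfolding permutation_mat_def pmat_def by blast
  have Pc: "P \<in> carrier_mat n n" by (simp add: P pmat_def)
  have PT: "transpose_mat P \<in> carrier_mat n n" using Pc by simp
  have e1: "P * Pinv = 1\<^sub>m n" using inv1 Pc unfolding inverts_mat_def by simp
  have e2: "Pinv * P = 1\<^sub>m (dim_row Pinv)" using inv2 unfolding inverts_mat_def by simp
  have dc: "dim_col Pinv = n" using arg_cong[OF e1, of dim_col] by simp
  have dr: "dim_row Pinv = n" using arg_cong[OF e2, of dim_col] Pc by simp
  have Pic: "Pinv \<in> carrier_mat n n" using dc dr by auto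
  have "Pinv = Pinv * 1\<^sub>m n" using Pic by simp
  also have "\<dots> = Pinv * (P * transpose_mat P)" using pmat_orth2[OF p, where 'a=int] P by simp
  also have "\<dots> = (Pinv * P) * transpose_mat P" using Pic Pc PT by (simp add: assoc_mult_mat)
  also have "\<dots> = transpose_mat P" using e2 dr PT by simp
  finally have PinvT: "Pinv = transpose_mat P" .
  define \<tau> where "\<tau> = hinv \<sigma>"
  have tp: "\<tau> permutes {..<n}" unfolding \<tau>_def using permutes_inv[OF p] .
  have conj: "Pinv * M * P = mat n n (\<lambda>(i,j). M $$ (\<tau> i, \<tau> j))"
    unfolding PinvT P \<tau>_def by (rule conj_pmat[OF p Mc])
  have nkl: "n = k + l" using arg_cong[OF eq, of dim_row] conj B F by simp
  have tin: "\<And>i. i < n \<Longrightarrow> \<tau> i < n" using permutes_in_image[OF tp] by auto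
  have zero: "helm_entry E (es ! \<tau> i) (es ! \<tau> j) = 0" if "i < k" "k \<le> j" "j < n" for i j
  proof -
    have "mat n n (\<lambda>(i,j). M $$ (\<tau> i, \<tau> j)) $$ (i,j) = four_block_mat B (0\<^sub>m k l) (0\<^sub>m l k) F $$ (i,j)"
      using conj eq by simp
    hence "M $$ (\<tau> i, \<tau> j) = 0" using that B F nkl by simp
    thus ?thesis using tin[of i] tin[of j] that n unfolding M_def by (simp add: helm_idx)
  qed
  define g where "g i = es ! \<tau> i" for i
  have injt: "inj_on \<tau> {..<n}" using permutes_inj_on[OF tp] .
  have injg: "inj_on g {..<n}"
  proof (rule inj_onI)
    fix x y assume "x \<in> {..<n}" "y \<in> {..<n}" "g x = g y"
    thus "x = y" using tin[of x] tin[of y] assms(1) n injt unfolding g_def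
      by (simp add: nth_eq_iff_index_eq inj_on_def)
  qed
  have img: "g ` {..<n} = E"
  proof -
    have "g ` {..<n} = (\<lambda>i. es ! i) ` (\<tau> ` {..<n})" unfolding g_def by auto
    also have "\<tau> ` {..<n} = {..<n}" using permutes_image[OF tp] .
    also have "(\<lambda>i. es ! i) ` {..<n} = set es" using n by (auto simp: in_set_conv_nth image_def) (metis lessThan_iff)
    finally show ?thesis using assms(2) by simp
  qed
  define E1 where "E1 = g ` {..<k}"
  define E2 where "E2 = g ` {k..<n}"
  have "E1 \<inter> E2 = g ` ({..<k} \<inter> {k..<n})" unfolding E1_def E2_def
    by (rule inj_on_image_Int[OF injg, symmetric]) (auto simp: nkl)
  hence disj: "E1 \<inter> E2 = {}" by auto
  have uu: "{..<k} \<union> {k..<n} = {..<n}" using nkl by auto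
  have un: "E1 \<union> E2 = E" unfolding E1_def E2_def img[symmetric] image_Un[symmetric] uu ..
  have ne1: "E1 \<noteq> {}" using k unfolding E1_def by auto
  have ne2: "E2 \<noteq> {}" using l nkl unfolding E2_def by auto
  have rel: "\<forall>e1\<in>E1. \<forall>e2\<in>E2. tri_rel E e1 e2 \<or> {fst e1, snd e1} \<inter> {fst e2, snd e2} = {}"
  proof (intro ballI)
    fix e1 e2 assume a: "e1 \<in> E1" "e2 \<in> E2"
    then obtain i j where ij: "i < k" "k \<le> j" "j < n" "e1 = g i" "e2 = g j"
      unfolding E1_def E2_def by auto
    have "e1 \<noteq> e2" using a disj by auto
    moreover have "helm_entry E e1 e2 = 0" using zero[OF ij(1-3)] ij unfolding g_def by simp
    ultimately show "tri_rel E e1 e2 \<or> {fst e1, snd e1} \<inter> {fst e2, snd e2} = {}"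
      using helm_zero by blast
  qed
  show ?thesis using ne1 ne2 disj un rel by blast
qed


lemma dir2:
  assumes "distinct es" "set es = E" "E1 \<noteq> {}" "E2 \<noteq> {}" "E1 \<inter> E2 = {}" "E1 \<union> E2 = E"
    and rel: "\<forall>e1\<in>E1. \<forall>e2\<in>E2. tri_rel E e1 e2 \<or> {fst e1, snd e1} \<inter> {fst e2, snd e2} = {}"
  shows "reducible_mat (helmholtzian E es)"
proof -
  define n where "n = length es"
  define es1 where "es1 = filter (\<lambda>e. e \<in> E1) es"
  define es2 where "es2 = filter (\<lambda>e. e \<notin> E1) es"
  define es' where "es' = es1 @ es2"
  define k where "k = length es1"
  define l where "l = length es2"
  have nkl: "n = k + l" unfolding n_def k_def l_def es1_def es2_def
    using sum_length_filter_compl[of "\<lambda>e. e \<in> E1" es] by simp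
  have ms: "mset es' = mset es" unfolding es'_def es1_def es2_def
    by (simp add: mset_filter multiset_partition[symmetric])
  then obtain \<tau> where tp: "\<tau> permutes {..<n}" and pl: "permute_list \<tau> es = es'"
    unfolding n_def by (rule mset_eq_permutation)
  have es'n: "\<And>i. i < n \<Longrightarrow> es' ! i = es ! \<tau> i"
    using permute_list_nth[OF tp[unfolded n_def]] pl n_def by metis
  define \<sigma> where "\<sigma> = hinv \<tau>"
  have p: "\<sigma> permutes {..<n}" unfolding \<sigma>_def using permutes_inv[OF tp] .
  have it: "hinv \<sigma> = \<tau>" unfolding \<sigma>_def using inv_inv_eq[OF permutes_bij[OF tp]] .
  define P :: "int mat" where "P = pmat n \<sigma>"
  define M where "M = helmholtzian E es"
  have Mc: "M \<in> carrier_mat n n" unfolding M_def n_def by (rule helm_dim)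
  have Pc: "P \<in> carrier_mat n n" by (simp add: P_def pmat_def)
  have pm: "permutation_mat n P" unfolding permutation_mat_def P_def pmat_def by (rule exI[of _ \<sigma>]) (simp add: p)
  have i1: "inverts_mat P (transpose_mat P)" unfolding inverts_mat_def P_def
    using pmat_orth2[OF p, where 'a=int] by (simp add: pmat_def)
  have i2: "inverts_mat (transpose_mat P) P" unfolding inverts_mat_def P_def
    using pmat_orth[OF p, where 'a=int] by (simp add: pmat_def)
  have k0: "0 < k"
  proof -
    obtain e where "e \<in> E1" using assms(3) by blast
    hence "e \<in> set es1" unfolding es1_def using assms(2,6) by auto
    thus ?thesis unfolding k_def by (cases es1) auto
  qed
  have l0: "0 < l"
  proof -
    obtain e where "e \<in> E2" using assms(4) by blast
    hence "e \<in> set es2" unfolding es2_def using assms(2,5,6) by auto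
    thus ?thesis unfolding l_def by (cases es2) auto
  qed
  have tin: "\<And>i. i < n \<Longrightarrow> \<tau> i < n" using permutes_in_image[OF tp] by auto
  have conj: "transpose_mat P * M * P = mat n n (\<lambda>(i,j). M $$ (\<tau> i, \<tau> j))"
    unfolding P_def it[symmetric] by (rule conj_pmat[OF p Mc])
  have in1: "es' ! i \<in> E1" if "i < k" for i
  proof -
    have "es' ! i = es1 ! i" using that unfolding es'_def k_def by (simp add: nth_append)
    moreover have "es1 ! i \<in> set es1" using that unfolding k_def by simp
    ultimately show ?thesis unfolding es1_def by simp
  qed
  have in2: "es' ! i \<in> E2" if "k \<le> i" "i < n" for i
  proof -
    have "es' ! i = es2 ! (i - k)" using that unfolding es'_def k_def by (simp add: nth_append)
    moreover have "es2 ! (i - k) \<in> set es2" using that nkl unfolding l_def by simp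
    ultimately show ?thesis unfolding es2_def using assms(2,6) by auto
  qed
  have zero: "helm_entry E (es' ! i) (es' ! j) = 0" if "i < k" "k \<le> j" "j < n" for i j
  proof -
    have a: "es' ! i \<in> E1" "es' ! j \<in> E2" using in1 in2 that by auto
    hence ne: "es' ! i \<noteq> es' ! j" using assms(5) by auto
    have "tri_rel E (es' ! i) (es' ! j) \<or> {fst (es' ! i), snd (es' ! i)} \<inter> {fst (es' ! j), snd (es' ! j)} = {}"
      using rel a by blast
    thus ?thesis using helm_zero[OF ne] by simp
  qed
  have zero': "helm_entry E (es' ! i) (es' ! j) = 0" if "j < k" "k \<le> i" "i < n" for i j
  proof -
    have a: "es' ! j \<in> E1" "es' ! i \<in> E2" using in1 in2 that by auto
    hence ne: "es' ! i \<noteq> es' ! j" using assms(5) by auto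
    have "tri_rel E (es' ! j) (es' ! i) \<or> {fst (es' ! j), snd (es' ! j)} \<inter> {fst (es' ! i), snd (es' ! i)} = {}"
      using rel a by blast
    hence "tri_rel E (es' ! i) (es' ! j) \<or> {fst (es' ! i), snd (es' ! i)} \<inter> {fst (es' ! j), snd (es' ! j)} = {}"
      by (metis tri_rel_sym Int_commute)
    thus ?thesis using helm_zero[OF ne] by simp
  qed
  have H1: "helmholtzian E es1 \<in> carrier_mat k k" unfolding k_def by (rule helm_dim)
  have H2: "helmholtzian E es2 \<in> carrier_mat l l" unfolding l_def by (rule helm_dim)
  have blk: "mat n n (\<lambda>(i,j). M $$ (\<tau> i, \<tau> j)) = four_block_mat (helmholtzian E es1) (0\<^sub>m k l) (0\<^sub>m l k) (helmholtzian E es2)"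
  proof (rule eq_matI)
    fix i j assume "i < dim_row (four_block_mat (helmholtzian E es1) (0\<^sub>m k l) (0\<^sub>m l k) (helmholtzian E es2))"
      "j < dim_col (four_block_mat (helmholtzian E es1) (0\<^sub>m k l) (0\<^sub>m l k) (helmholtzian E es2))"
    hence ij: "i < n" "j < n" using nkl H1 H2 by simp_all
    have "mat n n (\<lambda>(i,j). M $$ (\<tau> i, \<tau> j)) $$ (i,j) = helm_entry E (es' ! i) (es' ! j)"
      using ij tin[of i] tin[of j] es'n ij unfolding M_def n_def by (simp add: helm_idx)
    also have "\<dots> = four_block_mat (helmholtzian E es1) (0\<^sub>m k l) (0\<^sub>m l k) (helmholtzian E es2) $$ (i,j)"
    proof -
      have fb: "four_block_mat (helmholtzian E es1) (0\<^sub>m k l) (0\<^sub>m l k) (helmholtzian E es2) $$ (i,j) =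
        (if i < k then if j < k then helmholtzian E es1 $$ (i,j) else 0\<^sub>m k l $$ (i, j - k)
         else if j < k then 0\<^sub>m l k $$ (i - k, j) else helmholtzian E es2 $$ (i - k, j - k))"
        using ij nkl H1 H2 by (subst index_mat_four_block) auto
      have ei: "es' ! i = (if i < k then es1 ! i else es2 ! (i - k))" unfolding es'_def k_def by (simp add: nth_append)
      have ej: "es' ! j = (if j < k then es1 ! j else es2 ! (j - k))" unfolding es'_def k_def by (simp add: nth_append)
      show ?thesis
      proof (cases "i < k")
        case True
        then show ?thesis
        proof (cases "j < k")
          case True
          then show ?thesis using \<open>i < k\<close> fb ei ej by (simp add: helm_idx k_def)
        next
          case False
          then show ?thesis using \<open>i < k\<close> fb zero[of i j] ij nkl by simp
        qed
      next
        case False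
        then show ?thesis
        proof (cases "j < k")
          case True
          then show ?thesis using \<open>\<not> i < k\<close> fb zero'[of j i] ij nkl by simp
        next
          case False
          then show ?thesis using \<open>\<not> i < k\<close> fb ei ej ij nkl by (simp add: helm_idx l_def)
        qed
      qed
    qed
    finally show "mat n n (\<lambda>(i,j). M $$ (\<tau> i, \<tau> j)) $$ (i,j) = four_block_mat (helmholtzian E es1) (0\<^sub>m k l) (0\<^sub>m l k) (helmholtzian E es2) $$ (i,j)" .
  qed (use nkl H1 H2 in simp_all)
  have eqf: "transpose_mat P * M * P = four_block_mat (helmholtzian E es1) (0\<^sub>m k l) (0\<^sub>m l k) (helmholtzian E es2)"
    using conj blk by (rule trans)
  have "M \<in> carrier_mat n n \<and> permutation_mat n P \<and>
      inverts_mat P (transpose_mat P) \<and> inverts_mat (transpose_mat P) P \<and>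
      0 < k \<and> 0 < l \<and> helmholtzian E es1 \<in> carrier_mat k k \<and> helmholtzian E es2 \<in> carrier_mat l l \<and>
      transpose_mat P * M * P = four_block_mat (helmholtzian E es1) (0\<^sub>m k l) (0\<^sub>m l k) (helmholtzian E es2)"
    by (intro conjI Mc pm i1 i2 k0 l0 H1 H2 eqf)
  then show ?thesis unfolding reducible_mat_def M_def by (intro exI)
qed

theorem proposition3p1:
  fixes V :: "'v set" and E :: "('v \<times> 'v) set" and es :: "('v \<times> 'v) list"
  assumes "oriented_simple_graph V E"
    and "E \<noteq> {}"
    and "distinct es" and "set es = E"
  shows "reducible_mat (helmholtzian E es) \<longleftrightarrow>
    (\<exists>E1 E2. E1 \<noteq> {} \<and> E2 \<noteq> {} \<and> E1 \<inter> E2 = {} \<and> E1 \<union> E2 = E \<and>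
       (\<forall>e1\<in>E1. \<forall>e2\<in>E2. tri_rel E e1 e2 \<or> {fst e1, snd e1} \<inter> {fst e2, snd e2} = {}))"
proof
  assume "reducible_mat (helmholtzian E es)"
  thus "\<exists>E1 E2. E1 \<noteq> {} \<and> E2 \<noteq> {} \<and> E1 \<inter> E2 = {} \<and> E1 \<union> E2 = E \<and>
       (\<forall>e1\<in>E1. \<forall>e2\<in>E2. tri_rel E e1 e2 \<or> {fst e1, snd e1} \<inter> {fst e2, snd e2} = {})"
    by (rule dir1[OF assms(3,4)])
next
  assume "\<exists>E1 E2. E1 \<noteq> {} \<and> E2 \<noteq> {} \<and> E1 \<inter> E2 = {} \<and> E1 \<union> E2 = E \<and>
       (\<forall>e1\<in>E1. \<forall>e2\<in>E2. tri_rel E e1 e2 \<or> {fst e1, snd e1} \<inter> {fst e2, snd e2} = {})"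
  then obtain E1 E2 where h: "E1 \<noteq> {}" "E2 \<noteq> {}" "E1 \<inter> E2 = {}" "E1 \<union> E2 = E"
    "\<forall>e1\<in>E1. \<forall>e2\<in>E2. tri_rel E e1 e2 \<or> {fst e1, snd e1} \<inter> {fst e2, snd e2} = {}"
    by blast
  show "reducible_mat (helmholtzian E es)" by (rule dir2[OF assms(3,4) h])
qed

end
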